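(* Let $p>1$, $p'=p/(p-1)$, $C>0$, and define on $\Omega_C=\{(F,\mathbf{f},M):\mathbf{f}\ge0,\ \mathbf{f}^p\le F,\ 0\le M\le C\}$ $$\mathbb{B}(F,\mathbf{f},M;C)=C\left[(p')^pF-\frac{(p\mathbf{f})^p}{(p-1)\,(M/C+p-1)^{p-1}}\right].$$ Then $0\le\mathbb{B}(F,\mathbf{f},M;C)\le(p')^pCF$, $\mathbb{B}(t^pF,t\mathbf{f},M;C)=t^p\mathbb{B}(F,\mathbf{f},M;C)$ for $t\ge0$, and for all triples $(F,\mathbf{f},M),(F_\pm,\mathbf{f}_\pm,M_\pm)\in\Omega_C$ with $F=\tfrac12(F_++F_-)$, $\mathbf{f}=\tfrac12(\mathbf{f}_++\mathbf{f}_-)$, $M=\Delta M+\tfrac12(M_++M_-)$, $0\le\Delta M\le M$, $$\mathbb{B}(F,\mathbf{f},M;C)\ge\tfrac12\{\mathbb{B}(F_+,\mathbf{f}_+,M_+;C)+\mathbb{B}(F_-,\mathbf{f}_-,M_-;C)\}+\Delta M\,\mathbf{f}^p.$$ *)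

theory Defs
  imports Complex_Main
begin

definition conj_exp :: "real \<Rightarrow> real" where
  "conj_exp p = p / (p - 1)"

definition OmegaC :: "real \<Rightarrow> real \<Rightarrow> (real \<times> real \<times> real) set" where
  "OmegaC p C = {(F, f, M). f \<ge> 0 \<and> f powr p \<le> F \<and> 0 \<le> M \<and> M \<le> C}"

definition BB :: "real \<Rightarrow> real \<Rightarrow> real \<Rightarrow> real \<Rightarrow> real \<Rightarrow> real" where
  "BB p F f M C = C * ((conj_exp p) powr p * F
      - (p * f) powr p / ((p - 1) * (M / C + p - 1) powr (p - 1)))"

end

theory Submission
  imports Defs "HOL-Analysis.Analysis"
begin

lemma T1:
  fixes p u v :: real
  assumes "p \<ge> 1" "u \<ge> 0" "v > 0"
  shows "u powr p - v powr p \<ge> p * v powr (p-1) * (u - v)"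
proof (cases "u = 0")
  case True
  have e: "v powr p = v powr (p-1) * v" using assms by (simp add: powr_diff)
  have "v powr (p-1) * v \<ge> 0" using assms by simp
  hence "p * (v powr (p-1) * v) \<ge> v powr (p-1) * v" using assms(1)
    by (metis mult_right_mono mult_1)
  then show ?thesis using True assms e by (simp add: algebra_simps)
next
  case False
  have "p * v powr (p-1) * (u - v) \<le> u powr p - v powr p"
    using assms False
    by (intro convex_on_imp_above_tangent[where A = "{0<..}", OF powr_convex])
       (auto intro!: derivative_eq_intros simp: interior_open)
  then show ?thesis by simp
qed

lemma T2:
  fixes p x y :: real
  assumes "p > 1" "x > 0" "y > 0"
  shows "x powr (1-p) - y powr (1-p) \<ge> (1-p) * y powr (-p) * (x - y)"
proof -
  have cv: "convex_on {0<..} (\<lambda>x::real. x powr (1-p))"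
  proof (rule f''_ge0_imp_convex[where f'="\<lambda>x. (1-p) * x powr (1 - p - 1)" and f''="\<lambda>x. (1-p) * ((1 - p - 1) * x powr (1 - p - 1 - 1))"])
    show "convex {0::real<..}" by simp
    fix x :: real assume "x \<in> {0<..}"
    then have x: "x > 0" by simp
    show "DERIV (\<lambda>x. x powr (1-p)) x :> (1-p) * x powr (1 - p - 1)"
      using has_real_derivative_powr[OF x] .
    show "DERIV (\<lambda>x. (1-p) * x powr (1 - p - 1)) x :> (1-p) * ((1 - p - 1) * x powr (1 - p - 1 - 1))"
      using DERIV_cmult[OF has_real_derivative_powr[OF x, of "1 - p - 1"], of "1-p"] .
    show "0 \<le> (1-p) * ((1 - p - 1) * x powr (1 - p - 1 - 1))"
      using assms by (intro mult_nonpos_nonpos mult_nonpos_nonneg) auto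
  qed
  have d: "((\<lambda>x. x powr (1-p)) has_field_derivative (1-p) * y powr (1 - p - 1)) (at y within {0<..})"
    using has_real_derivative_powr[OF assms(3)] by (rule has_field_derivative_at_within)
  have "(1-p) * y powr (1 - p - 1) * (x - y) \<le> x powr (1-p) - y powr (1-p)"
    by (rule convex_on_imp_above_tangent[OF cv _ _ _ d]) (use assms in \<open>auto simp: interior_open\<close>)
  then show ?thesis by simp
qed

definition phi :: "real \<Rightarrow> real \<Rightarrow> real \<Rightarrow> real" where
  "phi p f x = f powr p * x powr (1 - p)"

lemma phi_alt:
  assumes "x > 0" "f \<ge> 0"
  shows "phi p f x = x * (f / x) powr p"
  using assms by (simp add: phi_def powr_divide powr_diff)

lemma L1:
  assumes "p \<ge> 1" "f \<ge> 0" "x > 0" "v > 0"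
  shows "phi p f x \<ge> p * v powr (p-1) * f - (p-1) * v powr p * x"
proof -
  have t: "(f/x) powr p - v powr p \<ge> p * v powr (p-1) * (f/x - v)"
    using assms by (intro T1) auto
  have "x * ((f/x) powr p - v powr p) \<ge> x * (p * v powr (p-1) * (f/x - v))"
    using t assms by (intro mult_left_mono) auto
  moreover have "v powr (p-1) * v = v powr p" using assms by (simp add: powr_diff)
  then have "x * (p * v powr (p-1) * (f/x - v)) = p * v powr (p-1) * f - p * v powr p * x"
    using assms by (simp add: field_simps)
  moreover have "x * ((f/x) powr p - v powr p) = phi p f x - v powr p * x"
    using assms phi_alt[of x f p] by (simp add: algebra_simps)
  ultimately show ?thesis by (simp add: algebra_simps)
qed

lemma aux_lin: "p * A - (p - 1) * A = (A::real)"
  by (simp add: algebra_simps)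

lemma L1eq:
  assumes "p \<ge> 1" "f > 0" "x > 0"
  shows "phi p f x = p * (f/x) powr (p-1) * f - (p-1) * (f/x) powr p * x"
proof -
  define u where "u = f / x"
  have u: "u > 0" unfolding u_def using assms by simp
  have fu: "f = u * x" unfolding u_def using assms by simp
  have e: "u powr (p-1) * u = u powr p" using u by (simp add: powr_diff)
  have a: "u powr (p-1) * f = u powr p * x"
    unfolding fu e[symmetric] by (simp only: mult.assoc)
  have "p * u powr (p-1) * f - (p-1) * u powr p * x = p * (u powr p * x) - (p-1) * (u powr p * x)"
    by (simp only: mult.assoc a)
  also have "\<dots> = u powr p * x" by (rule aux_lin)
  also have "\<dots> = phi p f x" using phi_alt[of x f p] assms unfolding u_def by simp
  finally show ?thesis unfolding u_def by simp
qed

lemma J: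
  assumes "p \<ge> 1" "f1 \<ge> 0" "f2 \<ge> 0" "x1 > 0" "x2 > 0"
  shows "phi p ((f1+f2)/2) ((x1+x2)/2) \<le> (phi p f1 x1 + phi p f2 x2) / 2"
proof (cases "f1 + f2 = 0")
  case True
  then have "f1 = 0" "f2 = 0" using assms by auto
  then show ?thesis using assms by (simp add: phi_def)
next
  case False
  define v where "v = ((f1+f2)/2) / ((x1+x2)/2)"
  have v: "v > 0" using False assms unfolding v_def by (auto intro!: divide_pos_pos)
  have e: "phi p ((f1+f2)/2) ((x1+x2)/2) = p * v powr (p-1) * ((f1+f2)/2) - (p-1) * v powr p * ((x1+x2)/2)"
    unfolding v_def using assms False by (intro L1eq) auto
  have a: "phi p f1 x1 \<ge> p * v powr (p-1) * f1 - (p-1) * v powr p * x1"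
    using assms v by (intro L1) auto
  have b: "phi p f2 x2 \<ge> p * v powr (p-1) * f2 - (p-1) * v powr p * x2"
    using assms v by (intro L1) auto
  have e1: "p * v powr (p-1) * ((f1+f2)/2) = (p * v powr (p-1) * f1 + p * v powr (p-1) * f2)/2"
    by (simp add: algebra_simps)
  have e2: "(p-1) * v powr p * ((x1+x2)/2) = ((p-1) * v powr p * x1 + (p-1) * v powr p * x2)/2"
    by (simp add: field_simps)
  have m: "phi p ((f1+f2)/2) ((x1+x2)/2) = (p * v powr (p-1) * f1 + p * v powr (p-1) * f2)/2
     - ((p-1) * v powr p * x1 + (p-1) * v powr p * x2)/2"
    using e e1 e2 by simp
  show ?thesis using m a b by argo
qed

lemma BB_alt:
  assumes "p > 1" "C > 0" "M \<ge> 0" "f \<ge> 0"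
  shows "BB p F f M C = C * (conj_exp p powr p * F - p powr p / (p - 1) * phi p f (M/C + p - 1))"
proof -
  have "M/C \<ge> 0" using assms by simp
  then have x: "M/C + p - 1 > 0" using assms by linarith
  have "(M / C + p - 1) powr (1 - p) = inverse ((M / C + p - 1) powr (p - 1))"
    using powr_minus[of "M / C + p - 1" "p - 1"] by simp
  then show ?thesis unfolding BB_def phi_def
    by (simp add: powr_mult field_simps)
qed

theorem mainTheorem10:
  fixes p C :: real
  assumes "p > 1" and "C > 0"
  shows "(\<forall>F f M. (F, f, M) \<in> OmegaC p C \<longrightarrow>
            0 \<le> BB p F f M C \<and> BB p F f M C \<le> (conj_exp p) powr p * C * F)
       \<and> (\<forall>F f M t. (F, f, M) \<in> OmegaC p C \<longrightarrow> t \<ge> 0 \<longrightarrow>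
            BB p (t powr p * F) (t * f) M C = t powr p * BB p F f M C)
       \<and> (\<forall>F f M Fp fp Mp Fm fm Mm dM.
            (F, f, M) \<in> OmegaC p C \<longrightarrow> (Fp, fp, Mp) \<in> OmegaC p C \<longrightarrow>
            (Fm, fm, Mm) \<in> OmegaC p C \<longrightarrow>
            F = (Fp + Fm) / 2 \<longrightarrow> f = (fp + fm) / 2 \<longrightarrow>
            M = dM + (Mp + Mm) / 2 \<longrightarrow> 0 \<le> dM \<longrightarrow> dM \<le> M \<longrightarrow>
            BB p F f M C \<ge> (BB p Fp fp Mp C + BB p Fm fm Mm C) / 2 + dM * f powr p)"
proof (intro conjI allI impI)
  fix F f M assume "(F, f, M) \<in> OmegaC p C"
  then have h: "f \<ge> 0" "f powr p \<le> F" "0 \<le> M" "M \<le> C" by (auto simp: OmegaC_def)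
  have x: "M/C + p - 1 \<ge> p - 1" using h assms by simp
  have ph: "phi p f (M/C + p - 1) \<ge> 0" unfolding phi_def by simp
  have "phi p f (M/C + p - 1) \<le> f powr p * (p - 1) powr (1 - p)"
    unfolding phi_def using x assms
    by (intro mult_left_mono powr_mono2') auto
  also have "p powr p / (p - 1) * (f powr p * (p - 1) powr (1 - p)) = conj_exp p powr p * f powr p"
    using assms by (simp add: conj_exp_def powr_divide powr_diff field_simps)
  ultimately have "p powr p / (p - 1) * phi p f (M/C + p - 1) \<le> conj_exp p powr p * f powr p"
    using mult_left_mono[of "phi p f (M/C + p - 1)" "f powr p * (p - 1) powr (1 - p)" "p powr p / (p - 1)"] assms
    by simp
  also have "\<dots> \<le> conj_exp p powr p * F" using h by (intro mult_left_mono) auto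
  finally have "0 \<le> conj_exp p powr p * F - p powr p / (p - 1) * phi p f (M/C + p - 1)" by simp
  then show "0 \<le> BB p F f M C" using BB_alt[OF assms h(3,1), of F] assms by simp
  have "0 \<le> C * (p powr p / (p - 1) * phi p f (M/C + p - 1))" using ph assms by simp
  moreover have "BB p F f M C = conj_exp p powr p * C * F - C * (p powr p / (p - 1) * phi p f (M/C + p - 1))"
    using BB_alt[OF assms h(3,1), of F] by (simp add: algebra_simps)
  ultimately show "BB p F f M C \<le> conj_exp p powr p * C * F" by linarith
next
  fix F f M t :: real assume "(F, f, M) \<in> OmegaC p C" "t \<ge> 0"
  then have h: "f \<ge> 0" "0 \<le> M" by (auto simp: OmegaC_def)
  show "BB p (t powr p * F) (t * f) M C = t powr p * BB p F f M C"
    unfolding BB_def by (simp add: powr_mult algebra_simps)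
next
  fix F f M Fp fp Mp Fm fm Mm dM :: real
  assume o: "(F, f, M) \<in> OmegaC p C" "(Fp, fp, Mp) \<in> OmegaC p C" "(Fm, fm, Mm) \<in> OmegaC p C"
    and eF: "F = (Fp + Fm) / 2" and ef: "f = (fp + fm) / 2" and eM: "M = dM + (Mp + Mm) / 2"
    and d: "0 \<le> dM" "dM \<le> M"
  from o have h: "f \<ge> 0" "0 \<le> M" "M \<le> C" "fp \<ge> 0" "Mp \<ge> 0" "fm \<ge> 0" "Mm \<ge> 0"
    by (auto simp: OmegaC_def)
  define x1 where "x1 = Mp/C + p - 1"
  define x2 where "x2 = Mm/C + p - 1"
  define y where "y = M/C + p - 1"
  define K where "K = p powr p / (p - 1)"
  have q1: "Mp/C \<ge> 0" "Mm/C \<ge> 0" "M/C \<ge> 0" using h assms by simp_all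
  have q2: "M/C \<le> 1" using h assms by simp
  have x1: "x1 > 0" unfolding x1_def using q1 assms by linarith
  have x2: "x2 > 0" unfolding x2_def using q1 assms by linarith
  have q3: "M/C = dM/C + (Mp/C + Mm/C)/2" using eM by (simp add: add_divide_distrib)
  have yv: "y = (x1 + x2)/2 + dM / C" unfolding y_def x1_def x2_def using q3 by argo
  have y: "y > 0" "y \<le> p" unfolding y_def using q1 q2 assms by linarith+
  have Jf: "phi p f ((x1+x2)/2) \<le> (phi p fp x1 + phi p fm x2) / 2"
    unfolding ef using J[of p fp fm x1 x2] h x1 x2 assms by simp
  have T: "((x1+x2)/2) powr (1-p) - y powr (1-p) \<ge> (1-p) * y powr (-p) * ((x1+x2)/2 - y)"
    using T2[of p "(x1+x2)/2" y] assms x1 x2 y by simp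
  have T': "(1-p) * y powr (-p) * ((x1+x2)/2 - y) = (p - 1) * y powr (-p) * (dM / C)"
    using yv by (simp add: algebra_simps)
  have "phi p f ((x1+x2)/2) - phi p f y = f powr p * (((x1+x2)/2) powr (1-p) - y powr (1-p))"
    unfolding phi_def by (simp add: algebra_simps)
  also have "\<dots> \<ge> f powr p * ((p - 1) * y powr (-p) * (dM / C))"
    using T T' by (intro mult_left_mono) auto
  finally have P: "phi p f ((x1+x2)/2) - phi p f y \<ge> f powr p * ((p - 1) * y powr (-p) * (dM / C))" .
  define D where "D = (phi p fp x1 + phi p fm x2) / 2 - phi p f y"
  have D: "D \<ge> f powr p * ((p - 1) * y powr (-p) * (dM / C))" unfolding D_def using P Jf by argo
  have K: "K \<ge> 0" unfolding K_def using assms by simp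
  have "C * K * D \<ge> C * K * (f powr p * ((p - 1) * y powr (-p) * (dM / C)))"
    using D K assms by (intro mult_left_mono) auto
  also have "C * K * (f powr p * ((p - 1) * y powr (-p) * (dM / C))) = (p powr p * y powr (-p)) * (dM * f powr p)"
    unfolding K_def using assms by (simp add: field_simps)
  also have "p powr p * y powr (-p) = (p / y) powr p"
    unfolding powr_divide powr_minus by (simp add: divide_inverse)
  finally have CKD: "C * K * D \<ge> (p / y) powr p * (dM * f powr p)" .
  have "(p / y) powr p \<ge> 1" using y assms by (intro ge_one_powr_ge_zero) auto
  then have "(p / y) powr p * (dM * f powr p) \<ge> dM * f powr p"
    using d mult_right_mono[of 1 "(p / y) powr p" "dM * f powr p"] by simp
  with CKD have G: "C * K * D \<ge> dM * f powr p" by simp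
  have B1: "BB p F f M C = C * (conj_exp p powr p * F - K * phi p f y)"
    unfolding K_def y_def using BB_alt[OF assms h(2,1)] .
  have B2: "BB p Fp fp Mp C = C * (conj_exp p powr p * Fp - K * phi p fp x1)"
    unfolding K_def x1_def using BB_alt[OF assms h(5,4)] .
  have B3: "BB p Fm fm Mm C = C * (conj_exp p powr p * Fm - K * phi p fm x2)"
    unfolding K_def x2_def using BB_alt[OF assms h(7,6)] .
  have "BB p F f M C - (BB p Fp fp Mp C + BB p Fm fm Mm C) / 2 = C * K * D"
    unfolding B1 B2 B3 D_def by (simp add: eF field_simps)
  with G show "BB p F f M C \<ge> (BB p Fp fp Mp C + BB p Fm fm Mm C) / 2 + dM * f powr p" by simp
qed

end
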